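(* Let $k\ge 1$ and let $n_1,\ldots,n_k\ge 3$ be (not necessarily distinct) integers. Then the direct product $C_{n_1}\times\cdots\times C_{n_k}$ is $\mathbb{Z}_{n_1\cdots n_k}$-distance antimagic if and only if all of $n_1,\ldots,n_k$ are odd. In particular, for every $d\ge 1$ and odd $n\ge 3$, the direct product of $d$ copies of $C_n$ is $\mathbb{Z}_{n^d}$-distance antimagic.
   Context: $C_n$ is the cycle of length $n$. The direct product $G_1\times\cdots\times G_k$ has vertex set $V(G_1)\times\cdots\times V(G_k)$, with $(x_1,\ldots,x_k)$ and $(y_1,\ldots,y_k)$ adjacent iff $x_iy_i\in E(G_i)$ for every $i$. For a graph $G$ with $n$ vertices, a $\mathbb{Z}_n$-distance antimagic labelling is a bijection $f:V(G)\to\mathbb{Z}_n$ such that the weights $w_f(x)=\sum_{y\in N(x)} f(y)$ (mod $n$, $N(x)$ the open neighbourhood) are pairwise distinct; $G$ is $\mathbb{Z}_n$-distance antimagic if such a labelling exists. *)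

theory Defs
  imports Main
begin

definition nbhd :: "'a set \<Rightarrow> ('a \<Rightarrow> 'a \<Rightarrow> bool) \<Rightarrow> 'a \<Rightarrow> 'a set" where
  "nbhd V adj x = {y \<in> V. adj x y}"

text \<open>Z_N-distance antimagic: a bijection f : V \<rightarrow> Z_N (represented as {0..<N})
  whose neighbourhood sums, taken mod N, are pairwise distinct.\<close>
definition Zn_distance_antimagic ::
  "nat \<Rightarrow> 'a set \<Rightarrow> ('a \<Rightarrow> 'a \<Rightarrow> bool) \<Rightarrow> bool" where
  "Zn_distance_antimagic N V adj \<longleftrightarrow>
     (\<exists>f. bij_betw f V {0..<N} \<and>
          inj_on (\<lambda>x. (\<Sum>y\<in>nbhd V adj x. f y) mod N) V)"

definition cycle_verts :: "nat \<Rightarrow> nat set" where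
  "cycle_verts n = {0..<n}"

definition cycle_adj :: "nat \<Rightarrow> nat \<Rightarrow> nat \<Rightarrow> bool" where
  "cycle_adj n a b \<longleftrightarrow> b = (a + 1) mod n \<or> a = (b + 1) mod n"

definition cprod_verts :: "nat list \<Rightarrow> nat list set" where
  "cprod_verts ns = {xs. length xs = length ns \<and>
                         (\<forall>i<length ns. xs ! i \<in> cycle_verts (ns ! i))}"

definition cprod_adj :: "nat list \<Rightarrow> nat list \<Rightarrow> nat list \<Rightarrow> bool" where
  "cprod_adj ns xs ys \<longleftrightarrow> length xs = length ns \<and> length ys = length ns \<and>
                          (\<forall>i<length ns. cycle_adj (ns ! i) (xs ! i) (ys ! i))"

end

theory Submission
  imports Defs
begin

fun enc :: "nat list \<Rightarrow> nat list \<Rightarrow> nat" where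
  "enc (n#ns) (x#xs) = x + n * enc ns xs"
| "enc _ _ = 0"

abbreviation Nb where "Nb ns xs \<equiv> nbhd (cprod_verts ns) (cprod_adj ns) xs"

lemma verts_Nil: "cprod_verts [] = {[]}"
  by (auto simp: cprod_verts_def)

lemma verts_Cons: "cprod_verts (n#ns) = (\<lambda>(x,xs). x#xs) ` ({0..<n} \<times> cprod_verts ns)"
proof
  show "cprod_verts (n#ns) \<subseteq> (\<lambda>(x,xs). x#xs) ` ({0..<n} \<times> cprod_verts ns)"
  proof
    fix v assume v: "v \<in> cprod_verts (n#ns)"
    then obtain y ys where vy: "v = y#ys" by (cases v) (auto simp: cprod_verts_def)
    have "y < n" using v vy by (force simp: cprod_verts_def cycle_verts_def)
    moreover have "ys \<in> cprod_verts ns"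
    proof -
      have "\<forall>i<length ns. ys ! i \<in> cycle_verts (ns ! i)"
      proof (intro allI impI)
        fix i assume "i < length ns"
        then have "Suc i < length (n#ns)" by simp
        then show "ys ! i \<in> cycle_verts (ns ! i)" using v vy unfolding cprod_verts_def by fastforce
      qed
      then show ?thesis using v vy by (auto simp: cprod_verts_def)
    qed
    ultimately show "v \<in> (\<lambda>(x,xs). x#xs) ` ({0..<n} \<times> cprod_verts ns)" using vy by force
  qed
next
  show "(\<lambda>(x,xs). x#xs) ` ({0..<n} \<times> cprod_verts ns) \<subseteq> cprod_verts (n#ns)"
    by (auto simp: cprod_verts_def cycle_verts_def nth_Cons split: nat.splits)
qed

lemma adj_Cons: "cprod_adj (n#ns) (x#xs) (y#ys) \<longleftrightarrow> cycle_adj n x y \<and> cprod_adj ns xs ys"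
  unfolding cprod_adj_def by (auto simp: less_Suc_eq_0_disj nth_Cons split: nat.splits)

lemma adj_sym: "cprod_adj ns xs ys = cprod_adj ns ys xs"
  unfolding cprod_adj_def cycle_adj_def by auto

lemma nbhd_Cons: "Nb (n#ns) (x#xs) =
  (\<lambda>(y,ys). y#ys) ` ({y\<in>{0..<n}. cycle_adj n x y} \<times> Nb ns xs)"
  unfolding nbhd_def verts_Cons by (auto simp: adj_Cons)

lemma nbhd_Nil: "Nb [] [] = {[]}"
  by (auto simp: nbhd_def verts_Nil cprod_adj_def)

definition sc :: "nat \<Rightarrow> nat \<Rightarrow> nat" where "sc n x = (if x + 1 = n then 0 else x + 1)"
definition pd :: "nat \<Rightarrow> nat \<Rightarrow> nat" where "pd n x = (if x = 0 then n - 1 else x - 1)"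

lemma mod_sc: "a < n \<Longrightarrow> (a + 1) mod n = sc n a"
  unfolding sc_def by auto

lemma sc_pd_inv: "3 \<le> n \<Longrightarrow> x < n \<Longrightarrow> y < n \<Longrightarrow> x = sc n y \<longleftrightarrow> y = pd n x"
  unfolding sc_def pd_def by auto

lemma cyc_nb: assumes "3 \<le> n" "x < n"
  shows "{y\<in>{0..<n}. cycle_adj n x y} = {sc n x, pd n x}" "sc n x \<noteq> pd n x"
proof -
  show "{y\<in>{0..<n}. cycle_adj n x y} = {sc n x, pd n x}"
  proof (intro set_eqI iffI)
    fix y assume y: "y \<in> {y\<in>{0..<n}. cycle_adj n x y}"
    then have yn: "y < n" by simp
    have "y = (x + 1) mod n \<or> x = (y + 1) mod n" using y unfolding cycle_adj_def by simp
    then have "y = sc n x \<or> x = sc n y" by (simp only: mod_sc[OF assms(2)] mod_sc[OF yn])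
    then show "y \<in> {sc n x, pd n x}" using sc_pd_inv[OF assms(1,2) yn] by auto
  next
    fix y assume y: "y \<in> {sc n x, pd n x}"
    then have yn: "y < n" using assms by (auto simp: sc_def pd_def)
    have "y = sc n x \<or> x = sc n y" using y sc_pd_inv[OF assms(1,2) yn] by auto
    then have "y = (x + 1) mod n \<or> x = (y + 1) mod n" by (simp only: mod_sc[OF assms(2)] mod_sc[OF yn])
    then show "y \<in> {y\<in>{0..<n}. cycle_adj n x y}" using yn unfolding cycle_adj_def by simp
  qed
  show "sc n x \<noteq> pd n x" using assms by (auto simp: sc_def pd_def)
qed

lemma cyc_bound: "3 \<le> n \<Longrightarrow> x < n \<Longrightarrow> sc n x < n \<and> pd n x < n"
  by (auto simp: sc_def pd_def)

lemma sc_pd_mod: assumes "3 \<le> n" "x < n"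
  shows "int n dvd int (sc n x + pd n x) - 2 * int x"
proof -
  consider "x = 0" | "x + 1 = n" | "x \<noteq> 0" "x + 1 \<noteq> n" by blast
  then show ?thesis
  proof cases
    case 1 then show ?thesis using assms by (simp add: sc_def pd_def of_nat_diff)
  next
    case 2
    then have "int (sc n x + pd n x) - 2 * int x = int n * (-1)" using assms
      by (auto simp: sc_def pd_def of_nat_diff)
    then show ?thesis by (metis dvd_triv_left)
  next
    case 3 then show ?thesis using assms by (simp add: sc_def pd_def of_nat_diff)
  qed
qed


lemma fin_verts: "finite (cprod_verts ns)"
  by (induction ns) (auto simp: verts_Nil verts_Cons)

lemma nb_sub: "Nb ns xs \<subseteq> cprod_verts ns"
  by (auto simp: nbhd_def)

lemma inj_Cons2: "inj_on (\<lambda>(y::nat,ys). y#ys) A"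
  by (auto simp: inj_on_def)

lemma nb_card: "\<forall>n\<in>set ns. 3 \<le> n \<Longrightarrow> xs \<in> cprod_verts ns \<Longrightarrow> card (Nb ns xs) = 2 ^ length ns"
proof (induction ns arbitrary: xs)
  case Nil
  then show ?case by (simp add: verts_Nil nbhd_def cprod_adj_def)
next
  case (Cons n ns)
  then obtain x xs' where xs: "xs = x#xs'" "x < n" "xs' \<in> cprod_verts ns"
    by (auto simp: verts_Cons)
  have n3: "3 \<le> n" using Cons by simp
  have "card (Nb (n#ns) xs) = card ({sc n x, pd n x} \<times> Nb ns xs')"
    unfolding xs nbhd_Cons cyc_nb(1)[OF n3 xs(2)] by (rule card_image[OF inj_Cons2])
  also have "\<dots> = 2 * 2 ^ length ns"
    using Cons xs cyc_nb(2)[OF n3 xs(2)] by (simp add: card_cartesian_product)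
  finally show ?case by simp
qed

lemma enc_bij: "bij_betw (enc ns) (cprod_verts ns) {0..<prod_list ns}"
proof (induction ns)
  case Nil
  then show ?case by (simp add: verts_Nil bij_betw_def)
next
  case (Cons n ns)
  let ?P = "prod_list ns"
  have inj: "inj_on (enc ns) (cprod_verts ns)" and img: "enc ns ` cprod_verts ns = {0..<?P}"
    using Cons by (auto simp: bij_betw_def)
  show ?case unfolding bij_betw_def
  proof
    show "inj_on (enc (n # ns)) (cprod_verts (n # ns))"
    proof (rule inj_onI)
      fix as bs assume a: "as \<in> cprod_verts (n # ns)" and b: "bs \<in> cprod_verts (n # ns)"
        and e: "enc (n # ns) as = enc (n # ns) bs"
      obtain x xs where ax: "as = x#xs" "x < n" "xs \<in> cprod_verts ns" using a by (auto simp: verts_Cons)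
      obtain y ys where bx: "bs = y#ys" "y < n" "ys \<in> cprod_verts ns" using b by (auto simp: verts_Cons)
      have e2: "x + n * enc ns xs = y + n * enc ns ys" using e ax bx by simp
      have "(x + n * enc ns xs) mod n = x" using ax by simp
      moreover have "(y + n * enc ns ys) mod n = y" using bx by simp
      ultimately have xy: "x = y" using e2 by simp
      then have "enc ns xs = enc ns ys" using e2 ax(2) by simp
      then have "xs = ys" using inj ax bx by (auto dest: inj_onD)
      then show "as = bs" using ax bx xy by simp
    qed
  next
    show "enc (n # ns) ` cprod_verts (n # ns) = {0..<prod_list (n # ns)}"
    proof
      show "enc (n # ns) ` cprod_verts (n # ns) \<subseteq> {0..<prod_list (n # ns)}"
      proof
        fix z assume "z \<in> enc (n # ns) ` cprod_verts (n # ns)"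
        then obtain x xs where z: "z = x + n * enc ns xs" "x < n" "xs \<in> cprod_verts ns"
          by (auto simp: verts_Cons)
        have "enc ns xs < ?P" using img z(3) by auto
        then have "enc ns xs + 1 \<le> ?P" by simp
        then have "n * (enc ns xs + 1) \<le> n * ?P" by (rule mult_le_mono2)
        then show "z \<in> {0..<prod_list (n # ns)}" using z by simp
      qed
    next
      show "{0..<prod_list (n # ns)} \<subseteq> enc (n # ns) ` cprod_verts (n # ns)"
      proof
        fix z assume z: "z \<in> {0..<prod_list (n # ns)}"
        then have zl: "z < ?P * n" by (simp add: mult.commute)
        then have n0: "0 < n" by (cases "n = 0") auto
        have "z div n < ?P" using zl by (simp add: div_less_iff_less_mult n0)
        then have "z div n \<in> enc ns ` cprod_verts ns" using img by simp
        then obtain xs where xs: "xs \<in> cprod_verts ns" "enc ns xs = z div n" by (metis imageE)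
        have "z mod n < n" using n0 by simp
        then have "z mod n # xs \<in> cprod_verts (n#ns)" using xs by (auto simp: verts_Cons)
        moreover have "enc (n#ns) (z mod n # xs) = z" using xs by simp
        ultimately show "z \<in> enc (n # ns) ` cprod_verts (n # ns)" by force
      qed
    qed
  qed
qed


definition W :: "nat list \<Rightarrow> nat list \<Rightarrow> nat" where
  "W ns xs = (\<Sum>zs\<in>Nb ns xs. enc ns zs)"

lemma W_Cons: assumes "\<forall>n\<in>set (n#ns). 3 \<le> n" "x < n" "xs \<in> cprod_verts ns"
  shows "W (n#ns) (x#xs) = 2 ^ length ns * (sc n x + pd n x) + 2 * n * W ns xs"
proof -
  have n3: "3 \<le> n" using assms by simp
  have fin: "finite (Nb ns xs)" using fin_verts nb_sub by (rule finite_subset[rotated])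
  have cB: "card (Nb ns xs) = 2 ^ length ns" using assms nb_card by simp
  have "W (n#ns) (x#xs) = sum (enc (n#ns)) ((\<lambda>(y,ys). y#ys) ` ({sc n x, pd n x} \<times> Nb ns xs))"
    unfolding W_def nbhd_Cons cyc_nb(1)[OF n3 assms(2)] ..
  also have "\<dots> = (\<Sum>(y,ys)\<in>{sc n x, pd n x} \<times> Nb ns xs. y + n * enc ns ys)"
    by (subst sum.reindex[OF inj_Cons2]) (simp add: case_prod_beta')
  also have "\<dots> = (\<Sum>y\<in>{sc n x, pd n x}. \<Sum>ys\<in>Nb ns xs. y + n * enc ns ys)"
    by (rule sum.cartesian_product[symmetric])
  also have "\<dots> = (\<Sum>y\<in>{sc n x, pd n x}. card (Nb ns xs) * y + n * W ns xs)"
    by (simp add: sum.distrib sum_distrib_left W_def)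
  also have "\<dots> = 2 ^ length ns * (sc n x + pd n x) + 2 * n * W ns xs"
    using cyc_nb(2)[OF n3 assms(2)] cB by (simp add: algebra_simps)
  finally show ?thesis .
qed

lemma odd_prod: "\<forall>n\<in>set ns. odd n \<Longrightarrow> odd (prod_list ns)"
  by (induction ns) auto

lemma main_inj: "\<forall>n\<in>set ns. 3 \<le> n \<and> odd n \<Longrightarrow> xs \<in> cprod_verts ns \<Longrightarrow> ys \<in> cprod_verts ns
  \<Longrightarrow> int (prod_list ns) dvd int (W ns xs) - int (W ns ys) \<Longrightarrow> xs = ys"
proof (induction ns arbitrary: xs ys)
  case Nil
  then show ?case by (simp add: verts_Nil)
next
  case (Cons n ns)
  obtain x xs' where xs: "xs = x#xs'" "x < n" "xs' \<in> cprod_verts ns"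
    using Cons.prems by (auto simp: verts_Cons)
  obtain y ys' where ys: "ys = y#ys'" "y < n" "ys' \<in> cprod_verts ns"
    using Cons.prems by (auto simp: verts_Cons)
  have n3: "3 \<le> n" and on: "odd n" using Cons.prems by auto
  have all3: "\<forall>n\<in>set (n#ns). 3 \<le> n" using Cons.prems by auto
  let ?P = "prod_list ns"
  let ?c = "(2::int) ^ length ns"
  define D where "D = int (W ns xs') - int (W ns ys')"
  have eq: "int (W (n#ns) xs) - int (W (n#ns) ys) =
      ?c * (int (sc n x + pd n x) - int (sc n y + pd n y)) + int n * (2 * D)"
    unfolding xs(1) ys(1) W_Cons[OF all3 xs(2,3)] W_Cons[OF all3 ys(2,3)] D_def
    by (simp add: algebra_simps)
  have dv: "int n * int ?P dvd ?c * (int (sc n x + pd n x) - int (sc n y + pd n y)) + int n * (2 * D)"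
    using Cons.prems(4) eq by simp
  then have "int n dvd ?c * (int (sc n x + pd n x) - int (sc n y + pd n y)) + int n * (2 * D)"
    using dvd_mult_left by blast
  then have "int n dvd ?c * (int (sc n x + pd n x) - int (sc n y + pd n y))"
    by (simp add: dvd_add_left_iff)
  moreover have "coprime (int n) ?c" using on by (simp add: coprime_right_2_iff_odd)
  ultimately have "int n dvd int (sc n x + pd n x) - int (sc n y + pd n y)"
    using coprime_dvd_mult_right_iff by blast
  moreover have "int n dvd int (sc n x + pd n x) - 2 * int x" by (rule sc_pd_mod[OF n3 xs(2)])
  moreover have "int n dvd int (sc n y + pd n y) - 2 * int y" by (rule sc_pd_mod[OF n3 ys(2)])
  ultimately have "int n dvd (int (sc n x + pd n x) - int (sc n y + pd n y))
     - (int (sc n x + pd n x) - 2 * int x) + (int (sc n y + pd n y) - 2 * int y)"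
    by (rule dvd_add[OF dvd_diff])
  then have "int n dvd 2 * (int x - int y)" by (simp add: algebra_simps)
  moreover have "coprime (int n) 2" using on by (simp add: coprime_right_2_iff_odd)
  ultimately have "int n dvd int x - int y" using coprime_dvd_mult_right_iff by blast
  then have "int x mod int n = int y mod int n" by (simp add: mod_eq_dvd_iff)
  then have xy: "x = y" using xs(2) ys(2) by simp
  have "int n * int ?P dvd int n * (2 * D)" using dv xy by simp
  then have "int ?P dvd 2 * D" using n3 by simp
  moreover have "coprime (int ?P) 2" using odd_prod[of ns] Cons.prems by (simp add: coprime_right_2_iff_odd)
  ultimately have "int ?P dvd D" using coprime_dvd_mult_right_iff by blast
  then have "xs' = ys'" using Cons.IH[OF _ xs(3) ys(3)] Cons.prems unfolding D_def by simp
  then show ?case using xs ys xy by simp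
qed


lemma gauss2: "2 * (\<Sum>i<N. i) = N * (N - 1::nat)"
proof (induction N)
  case 0 then show ?case by simp
next
  case (Suc N) then show ?case by (cases N) (simp_all add: algebra_simps)
qed

lemma dvd_prodl: "n \<in> set ns \<Longrightarrow> (n::nat) dvd prod_list ns"
  by (induction ns) auto

lemma necessity:
  assumes ne: "ns \<noteq> []" and g3: "\<forall>n\<in>set ns. 3 \<le> n" and ev: "n0 \<in> set ns" "even n0"
    and am: "Zn_distance_antimagic (prod_list ns) (cprod_verts ns) (cprod_adj ns)"
  shows False
proof -
  let ?V = "cprod_verts ns" and ?N = "prod_list ns" and ?k = "length ns"
  obtain f where f: "bij_betw f ?V {0..<?N}"
    and inj: "inj_on (\<lambda>x. (\<Sum>y\<in>Nb ns x. f y) mod ?N) ?V"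
    using am unfolding Zn_distance_antimagic_def by blast
  define g where "g x = (\<Sum>y\<in>Nb ns x. f y) mod ?N" for x
  have fin: "finite ?V" by (rule fin_verts)
  have cV: "card ?V = ?N" using bij_betw_same_card[OF f] by simp
  have Npos: "0 < ?N" using g3 by (induction ns) auto
  have evN: "even ?N" using dvd_prodl[OF ev(1)] ev(2) by (meson dvd_trans)
  have injg: "inj_on g ?V" using inj unfolding g_def .
  have "g ` ?V \<subseteq> {0..<?N}" using Npos by (auto simp: g_def)
  moreover have "card (g ` ?V) = card {0..<?N}" using card_image[OF injg] cV by simp
  ultimately have gV: "g ` ?V = {0..<?N}" by (intro card_subset_eq) auto
  define S where "S = (\<Sum>i<?N. i)"
  have sumg: "(\<Sum>x\<in>?V. g x) = S"
    unfolding S_def lessThan_atLeast0 using sum.reindex[OF injg, of id] gV by simp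
  have sumf: "(\<Sum>y\<in>?V. f y) = S"
    unfolding S_def lessThan_atLeast0 using sum.reindex[of f ?V id] f
    by (simp add: bij_betw_def)
  have "(\<Sum>x\<in>?V. \<Sum>y\<in>Nb ns x. f y) = (\<Sum>x\<in>?V. \<Sum>y\<in>?V. if cprod_adj ns x y then f y else 0)"
    unfolding nbhd_def by (simp add: sum.inter_filter[OF fin])
  also have "\<dots> = (\<Sum>y\<in>?V. \<Sum>x\<in>?V. if cprod_adj ns x y then f y else 0)"
    by (rule sum.swap)
  also have "\<dots> = (\<Sum>y\<in>?V. \<Sum>x\<in>{x\<in>?V. cprod_adj ns x y}. f y)"
    by (rule sum.cong[OF refl], rule sum.inter_filter[OF fin, symmetric])
  also have "\<dots> = (\<Sum>y\<in>?V. 2 ^ ?k * f y)"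
  proof (rule sum.cong[OF refl])
    fix y assume y: "y \<in> ?V"
    have "{x\<in>?V. cprod_adj ns x y} = Nb ns y" unfolding nbhd_def using adj_sym by blast
    then show "(\<Sum>x\<in>{x\<in>?V. cprod_adj ns x y}. f y) = 2 ^ ?k * f y"
      using nb_card[OF g3 y] by simp
  qed
  also have "\<dots> = 2 ^ ?k * S" by (simp only: sum_distrib_left[symmetric] sumf)
  finally have dbl: "(\<Sum>x\<in>?V. \<Sum>y\<in>Nb ns x. f y) = 2 ^ ?k * S" .
  have "S mod ?N = (\<Sum>x\<in>?V. g x) mod ?N" using sumg by simp
  also have "\<dots> = (\<Sum>x\<in>?V. \<Sum>y\<in>Nb ns x. f y) mod ?N"
    unfolding g_def by (rule mod_sum_eq)
  also have "\<dots> = (2 ^ ?k * S) mod ?N" using dbl by simp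
  also have "\<dots> = 0"
  proof -
    obtain k' where k': "?k = Suc k'" using ne by (cases ns) auto
    have "2 ^ ?k * S = 2 ^ k' * (?N * (?N - 1))" using gauss2[of ?N] unfolding S_def k' by simp
    then show ?thesis by simp
  qed
  finally have dS: "?N dvd S" by (simp add: mod_eq_0_iff_dvd)
  obtain m where m: "?N = 2 * m" using evN by blast
  have m0: "0 < m" using m Npos by simp
  have "2 * S = 2 * (m * (2 * m - 1))" using gauss2[of ?N] unfolding S_def m by simp
  then have "S = m * (2 * m - 1)" by simp
  then have "m * 2 dvd m * (2 * m - 1)" using dS m by (simp add: mult.commute)
  then have "2 dvd 2 * m - 1" using m0 by simp
  then show False using m0 by presburger
qed


lemma sufficiency:
  assumes "\<forall>n\<in>set ns. 3 \<le> n \<and> odd n"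
  shows "Zn_distance_antimagic (prod_list ns) (cprod_verts ns) (cprod_adj ns)"
  unfolding Zn_distance_antimagic_def
proof (intro exI conjI)
  show "bij_betw (enc ns) (cprod_verts ns) {0..<prod_list ns}" by (rule enc_bij)
  show "inj_on (\<lambda>x. (\<Sum>y\<in>Nb ns x. enc ns y) mod prod_list ns) (cprod_verts ns)"
  proof (rule inj_onI)
    fix xs ys assume xs: "xs \<in> cprod_verts ns" and ys: "ys \<in> cprod_verts ns"
      and e: "(\<Sum>y\<in>Nb ns xs. enc ns y) mod prod_list ns = (\<Sum>y\<in>Nb ns ys. enc ns y) mod prod_list ns"
    then have "W ns xs mod prod_list ns = W ns ys mod prod_list ns" by (simp add: W_def)
    then have "int (W ns xs) mod int (prod_list ns) = int (W ns ys) mod int (prod_list ns)"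
      by (metis zmod_int)
    then have "int (prod_list ns) dvd int (W ns xs) - int (W ns ys)" by (simp add: mod_eq_dvd_iff)
    then show "xs = ys" using main_inj[OF assms xs ys] by simp
  qed
qed

theorem mainTheorem15:
  shows "(\<forall>ns::nat list. ns \<noteq> [] \<longrightarrow> (\<forall>n\<in>set ns. n \<ge> 3) \<longrightarrow>
            (Zn_distance_antimagic (prod_list ns) (cprod_verts ns) (cprod_adj ns)
             \<longleftrightarrow> (\<forall>n\<in>set ns. odd n)))
       \<and> (\<forall>(d::nat) (n::nat). d \<ge> 1 \<longrightarrow> odd n \<longrightarrow> n \<ge> 3 \<longrightarrow>
            Zn_distance_antimagic (n ^ d) (cprod_verts (replicate d n))
              (cprod_adj (replicate d n)))"
proof (intro conjI allI impI)
  fix ns :: "nat list" assume ne: "ns \<noteq> []" and g3: "\<forall>n\<in>set ns. n \<ge> 3"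
  show "Zn_distance_antimagic (prod_list ns) (cprod_verts ns) (cprod_adj ns)
             \<longleftrightarrow> (\<forall>n\<in>set ns. odd n)"
  proof
    assume am: "Zn_distance_antimagic (prod_list ns) (cprod_verts ns) (cprod_adj ns)"
    show "\<forall>n\<in>set ns. odd n"
      using necessity[OF ne g3 _ _ am] by blast
  next
    assume "\<forall>n\<in>set ns. odd n"
    then show "Zn_distance_antimagic (prod_list ns) (cprod_verts ns) (cprod_adj ns)"
      using sufficiency g3 by blast
  qed
next
  fix d n :: nat assume d: "d \<ge> 1" and o: "odd n" and n3: "n \<ge> 3"
  have "Zn_distance_antimagic (prod_list (replicate d n)) (cprod_verts (replicate d n)) (cprod_adj (replicate d n))"
    by (rule sufficiency) (use o n3 in auto)
  then show "Zn_distance_antimagic (n ^ d) (cprod_verts (replicate d n)) (cprod_adj (replicate d n))"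
    by (simp add: prod_list_replicate)
qed

end
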